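(* For every graph $G$, $\widehat{\Theta}(G)=\rho_T(G)=\rho_{\widehat{T}}(\overline{G})=\Theta(\overline{G})$, where $\overline{G}$ is the complement of $G$.
   Context: Graphs are finite and simple. A graph $G=(V,E)$ is a threshold graph if there exist weights $w:V\to\mathbb{R}$ and a real number $s$ such that for all distinct $i,j\in V$: $w(i)+w(j)\ge s$ iff $ij\in E$. $\Theta(G)$ is the least $k\ge 1$ such that there exist threshold graphs $(V,E_1),\dots,(V,E_k)$ with each $E_i\subseteq E$ and $\bigcup_i E_i=E$. $\widehat{\Theta}(G)$ is the least $k\ge1$ such that there exist threshold graphs $(V,E_1),\dots,(V,E_k)$ with $\bigcap_i E_i=E$. Min-plus dot product: $u\odot v=\min_i(u_i+v_i)$ on $(\mathbb{R}\cup\{\infty\})^k$; max-plus dot product: $u\,\widehat{\odot}\,v=\max_i(u_i+v_i)$ on $(\mathbb{R}\cup\{-\infty\})^k$. A min-plus (resp. max-plus) $k$-tropical dot product representation of $G$ is a map $f$ from $V$ to $(\mathbb{R}\cup\{\infty\})^k$ (resp. $(\mathbb{R}\cup\{-\infty\})^k$) with threshold $t>0$ such that for distinct $x,y$: $xy\in E$ iff $f(x)\odot f(y)\ge t$ (resp. $f(x)\,\widehat{\odot}\,f(y)\ge t$). $\rho_T(G)$ (resp. $\rho_{\widehat T}(G)$) is the least $k\ge 1$ for which such a min-plus (resp. max-plus) representation exists. *)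

theory Defs
  imports Complex_Main "HOL-Library.Extended_Real"
begin

definition graph :: "'a set \<Rightarrow> 'a set set \<Rightarrow> bool" where
  "graph V E \<longleftrightarrow> finite V \<and> (\<forall>e\<in>E. \<exists>x y. x \<in> V \<and> y \<in> V \<and> x \<noteq> y \<and> e = {x, y})"

definition complement :: "'a set \<Rightarrow> 'a set set \<Rightarrow> 'a set set" where
  "complement V E = {{x, y} | x y. x \<in> V \<and> y \<in> V \<and> x \<noteq> y \<and> {x, y} \<notin> E}"

definition threshold_graph :: "'a set \<Rightarrow> 'a set set \<Rightarrow> bool" where
  "threshold_graph V E \<longleftrightarrow> graph V E \<and>
     (\<exists>(w :: 'a \<Rightarrow> real) (s :: real). \<forall>i\<in>V. \<forall>j\<in>V. i \<noteq> j \<longrightarrow>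
        (w i + w j \<ge> s \<longleftrightarrow> {i, j} \<in> E))"

definition Theta :: "'a set \<Rightarrow> 'a set set \<Rightarrow> nat" where
  "Theta V E = (LEAST k. k \<ge> 1 \<and> (\<exists>Es :: nat \<Rightarrow> 'a set set.
      (\<forall>i<k. threshold_graph V (Es i) \<and> Es i \<subseteq> E) \<and> (\<Union>i<k. Es i) = E))"

definition Theta_hat :: "'a set \<Rightarrow> 'a set set \<Rightarrow> nat" where
  "Theta_hat V E = (LEAST k. k \<ge> 1 \<and> (\<exists>Es :: nat \<Rightarrow> 'a set set.
      (\<forall>i<k. threshold_graph V (Es i)) \<and> (\<Inter>i<k. Es i) = E))"

text \<open>Vectors in (R \<union> {\<infinity>})^k resp. (R \<union> {-\<infinity>})^k are functions nat \<Rightarrow> ereal,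
  indexed by i < k.\<close>
definition min_plus_dot :: "nat \<Rightarrow> (nat \<Rightarrow> ereal) \<Rightarrow> (nat \<Rightarrow> ereal) \<Rightarrow> ereal" where
  "min_plus_dot k u v = Min ((\<lambda>i. u i + v i) ` {..<k})"

definition max_plus_dot :: "nat \<Rightarrow> (nat \<Rightarrow> ereal) \<Rightarrow> (nat \<Rightarrow> ereal) \<Rightarrow> ereal" where
  "max_plus_dot k u v = Max ((\<lambda>i. u i + v i) ` {..<k})"

definition min_plus_rep :: "'a set \<Rightarrow> 'a set set \<Rightarrow> nat \<Rightarrow> ('a \<Rightarrow> nat \<Rightarrow> ereal) \<Rightarrow> real \<Rightarrow> bool" where
  "min_plus_rep V E k f t \<longleftrightarrow> t > 0 \<and> (\<forall>x\<in>V. \<forall>i<k. f x i \<noteq> -\<infinity>) \<and>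
     (\<forall>x\<in>V. \<forall>y\<in>V. x \<noteq> y \<longrightarrow> ({x, y} \<in> E \<longleftrightarrow> min_plus_dot k (f x) (f y) \<ge> ereal t))"

definition max_plus_rep :: "'a set \<Rightarrow> 'a set set \<Rightarrow> nat \<Rightarrow> ('a \<Rightarrow> nat \<Rightarrow> ereal) \<Rightarrow> real \<Rightarrow> bool" where
  "max_plus_rep V E k f t \<longleftrightarrow> t > 0 \<and> (\<forall>x\<in>V. \<forall>i<k. f x i \<noteq> \<infinity>) \<and>
     (\<forall>x\<in>V. \<forall>y\<in>V. x \<noteq> y \<longrightarrow> ({x, y} \<in> E \<longleftrightarrow> max_plus_dot k (f x) (f y) \<ge> ereal t))"

definition rho_T :: "'a set \<Rightarrow> 'a set set \<Rightarrow> nat" where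
  "rho_T V E = (LEAST k. k \<ge> 1 \<and> (\<exists>f t. min_plus_rep V E k f t))"

definition rho_T_hat :: "'a set \<Rightarrow> 'a set set \<Rightarrow> nat" where
  "rho_T_hat V E = (LEAST k. k \<ge> 1 \<and> (\<exists>f t. max_plus_rep V E k f t))"

end

theory Submission
  imports Defs
begin

definition edges_of :: "'a set \<Rightarrow> ('a \<Rightarrow> 'a \<Rightarrow> bool) \<Rightarrow> 'a set set" where
  "edges_of V P = {{x, y} | x y. x \<in> V \<and> y \<in> V \<and> x \<noteq> y \<and> P x y}"

lemma edges_of_mem:
  assumes "\<And>x y. P x y = P y x" "i \<in> V" "j \<in> V" "i \<noteq> j"
  shows "{i, j} \<in> edges_of V P \<longleftrightarrow> P i j"
proof
  assume "{i, j} \<in> edges_of V P"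
  then obtain x y where "{i,j} = {x,y}" "P x y" unfolding edges_of_def by blast
  then show "P i j" using assms(1) by (metis doubleton_eq_iff)
next
  assume "P i j" then show "{i, j} \<in> edges_of V P" unfolding edges_of_def using assms by blast
qed

lemma edges_of_elem:
  "e \<in> edges_of V P \<Longrightarrow> \<exists>x y. x \<in> V \<and> y \<in> V \<and> x \<noteq> y \<and> e = {x, y}"
  unfolding edges_of_def by blast

lemma thr_intro:
  assumes "finite V"
  shows "threshold_graph V (edges_of V (\<lambda>x y. w x + w y \<ge> (s::real)))"
  unfolding threshold_graph_def graph_def
proof (intro conjI)
  show "finite V" by fact
  show "\<forall>e\<in>edges_of V (\<lambda>x y. s \<le> w x + w y). \<exists>x y. x \<in> V \<and> y \<in> V \<and> x \<noteq> y \<and> e = {x, y}"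
    using edges_of_elem by blast
  show "\<exists>(w'::'a\<Rightarrow>real) (s'::real). \<forall>i\<in>V. \<forall>j\<in>V. i \<noteq> j \<longrightarrow>
        (s' \<le> w' i + w' j) = ({i, j} \<in> edges_of V (\<lambda>x y. s \<le> w x + w y))"
  proof -
    have "\<forall>i\<in>V. \<forall>j\<in>V. i \<noteq> j \<longrightarrow> (s \<le> w i + w j) = ({i, j} \<in> edges_of V (\<lambda>x y. s \<le> w x + w y))"
      using edges_of_mem[of "\<lambda>x y. s \<le> w x + w y" _ V] by (simp add: add.commute)
    then show ?thesis by blast
  qed
qed

lemma compl_mem:
  assumes "x \<in> V" "y \<in> V" "x \<noteq> y"
  shows "{x, y} \<in> complement V X \<longleftrightarrow> {x, y} \<notin> X"
  unfolding complement_def using assms by auto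

lemma compl_elem:
  "e \<in> complement V X \<Longrightarrow> \<exists>x y. x \<in> V \<and> y \<in> V \<and> x \<noteq> y \<and> e = {x, y}"
  unfolding complement_def by blast

lemma graph_compl: "finite V \<Longrightarrow> graph V (complement V X)"
  unfolding graph_def using compl_elem by blast

lemma gap:
  fixes g :: "'a \<Rightarrow> 'a \<Rightarrow> real"
  assumes "finite V"
  shows "\<exists>m. m < s \<and> (\<forall>x\<in>V. \<forall>y\<in>V. g x y < s \<longleftrightarrow> g x y \<le> m)"
proof -
  define S where "S = {g x y | x y. x \<in> V \<and> y \<in> V \<and> g x y < s}"
  have fS: "finite S"
  proof -
    have "S \<subseteq> (\<lambda>p. g (fst p) (snd p)) ` (V \<times> V)" unfolding S_def by force
    then show ?thesis using assms finite_subset by blast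
  qed
  define m where "m = (if S = {} then s - 1 else Max S)"
  have "m < s"
  proof (cases "S = {}")
    case False
    then have "Max S \<in> S" using fS by simp
    then show ?thesis using False unfolding m_def S_def by auto
  qed (simp add: m_def)
  moreover have "\<forall>x\<in>V. \<forall>y\<in>V. g x y < s \<longleftrightarrow> g x y \<le> m"
  proof (intro ballI iffI)
    fix x y assume "x \<in> V" "y \<in> V" "g x y < s"
    then have "g x y \<in> S" unfolding S_def by blast
    then show "g x y \<le> m" using fS unfolding m_def by auto
  next
    fix x y assume "g x y \<le> m" then show "g x y < s" using \<open>m < s\<close> by simp
  qed
  ultimately show ?thesis by blast
qed

lemma thr_compl:
  assumes "threshold_graph V X"
  shows "threshold_graph V (complement V X)"
proof -
  have fin: "finite V" using assms unfolding threshold_graph_def graph_def by blast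
  obtain w :: "'a \<Rightarrow> real" and s :: real where ws: "\<forall>i\<in>V. \<forall>j\<in>V. i \<noteq> j \<longrightarrow> (w i + w j \<ge> s \<longleftrightarrow> {i, j} \<in> X)"
    using assms unfolding threshold_graph_def by blast
  obtain m where m: "m < s" "\<forall>x\<in>V. \<forall>y\<in>V. w x + w y < s \<longleftrightarrow> w x + w y \<le> m"
    using gap[OF fin, where g="\<lambda>x y. w x + w y" and s=s] by blast
  have "\<forall>i\<in>V. \<forall>j\<in>V. i \<noteq> j \<longrightarrow> ((- w i) + (- w j) \<ge> - m \<longleftrightarrow> {i, j} \<in> complement V X)"
  proof (intro ballI impI)
    fix i j assume "i \<in> V" "j \<in> V" "i \<noteq> j"
    then show "((- w i) + (- w j) \<ge> - m \<longleftrightarrow> {i, j} \<in> complement V X)"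
      using compl_mem[of i V j X] ws m by force
  qed
  then have "\<exists>(w::'a\<Rightarrow>real) (s::real). \<forall>i\<in>V. \<forall>j\<in>V. i \<noteq> j \<longrightarrow> (w i + w j \<ge> s \<longleftrightarrow> {i, j} \<in> complement V X)"
    by - (rule exI[where x="\<lambda>i. - w i"], rule exI[where x="-m"], simp)
  then show ?thesis unfolding threshold_graph_def using graph_compl[OF fin] by blast
qed

lemma sum_bound:
  fixes r :: "'a \<Rightarrow> real"
  assumes "finite V" "y \<in> V"
  shows "\<bar>r y\<bar> \<le> (\<Sum>x\<in>V. \<bar>r x\<bar>)"
  using member_le_sum[of y V "\<lambda>x. \<bar>r x\<bar>"] assms by auto

lemma realize_min:
  assumes "finite V" "\<forall>x\<in>V. h x \<noteq> -\<infinity>"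
  shows "\<exists>w::'a\<Rightarrow>real. \<forall>x\<in>V. \<forall>y\<in>V. (h x + h y \<ge> ereal t \<longleftrightarrow> w x + w y \<ge> t)"
proof -
  define S where "S = (\<Sum>x\<in>V. abs (real_of_ereal (h x)))"
  define M where "M = \<bar>t\<bar> + 1 + S"
  have S0: "S \<ge> 0" unfolding S_def by (intro sum_nonneg) (rule abs_ge_zero)
  have bd: "\<And>y. y \<in> V \<Longrightarrow> abs (real_of_ereal (h y)) \<le> S"
    unfolding S_def by (rule sum_bound[OF assms(1), where r="\<lambda>x. real_of_ereal (h x)"])
  define w where "w x = (if h x = \<infinity> then M else real_of_ereal (h x))" for x
  have "\<forall>x\<in>V. \<forall>y\<in>V. (h x + h y \<ge> ereal t \<longleftrightarrow> w x + w y \<ge> t)"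
  proof (intro ballI)
    fix x y assume xy: "x \<in> V" "y \<in> V"
    have bx: "abs (real_of_ereal (h x)) \<le> S" and by': "abs (real_of_ereal (h y)) \<le> S" using bd xy by auto
    show "(h x + h y \<ge> ereal t \<longleftrightarrow> w x + w y \<ge> t)"
      using assms(2) xy bx by' S0
      by (cases "h x"; cases "h y") (auto simp: w_def M_def)
  qed
  then show ?thesis by blast
qed

lemma realize_max:
  assumes "finite V" "\<forall>x\<in>V. h x \<noteq> \<infinity>" "t > 0"
  shows "\<exists>w::'a\<Rightarrow>real. \<forall>x\<in>V. \<forall>y\<in>V. (h x + h y \<ge> ereal t \<longleftrightarrow> w x + w y \<ge> t)"
proof -
  define S where "S = (\<Sum>x\<in>V. abs (real_of_ereal (h x)))"
  define M where "M = \<bar>t\<bar> + 1 + S"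
  have S0: "S \<ge> 0" unfolding S_def by (intro sum_nonneg) (rule abs_ge_zero)
  have bd: "\<And>y. y \<in> V \<Longrightarrow> abs (real_of_ereal (h y)) \<le> S"
    unfolding S_def by (rule sum_bound[OF assms(1), where r="\<lambda>x. real_of_ereal (h x)"])
  define w where "w x = (if h x = -\<infinity> then -M else real_of_ereal (h x))" for x
  have "\<forall>x\<in>V. \<forall>y\<in>V. (h x + h y \<ge> ereal t \<longleftrightarrow> w x + w y \<ge> t)"
  proof (intro ballI)
    fix x y assume xy: "x \<in> V" "y \<in> V"
    have bx: "abs (real_of_ereal (h x)) \<le> S" and by': "abs (real_of_ereal (h y)) \<le> S" using bd xy by auto
    show "(h x + h y \<ge> ereal t \<longleftrightarrow> w x + w y \<ge> t)"
      using assms(2,3) xy bx by' S0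
      by (cases "h x"; cases "h y") (auto simp: w_def M_def)
  qed
  then show ?thesis by blast
qed


lemma min_dot_ge:
  "1 \<le> k \<Longrightarrow> (c \<le> min_plus_dot k u v) \<longleftrightarrow> (\<forall>i<k. c \<le> u i + v i)"
  unfolding min_plus_dot_def by (subst Min_ge_iff) (auto simp: lessThan_empty_iff)

lemma max_dot_ge:
  "1 \<le> k \<Longrightarrow> (c \<le> max_plus_dot k u v) \<longleftrightarrow> (\<exists>i<k. c \<le> u i + v i)"
  unfolding max_plus_dot_def by (subst Max_ge_iff) (auto simp: lessThan_empty_iff)

lemma thr_weights:
  assumes "threshold_graph V X"
  shows "\<exists>p::('a\<Rightarrow>real)\<times>real. \<forall>a\<in>V. \<forall>b\<in>V. a \<noteq> b \<longrightarrow> (fst p a + fst p b \<ge> snd p \<longleftrightarrow> {a,b} \<in> X)"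
proof -
  obtain w :: "'a \<Rightarrow> real" and s :: real where
    "\<forall>a\<in>V. \<forall>b\<in>V. a \<noteq> b \<longrightarrow> (w a + w b \<ge> s \<longleftrightarrow> {a,b} \<in> X)"
    using assms unfolding threshold_graph_def by blast
  then show ?thesis by - (rule exI[where x="(w,s)"], simp)
qed

lemma inter_iff_min:
  assumes G: "graph V E" and k: "1 \<le> k"
  shows "(\<exists>Es. (\<forall>i<k. threshold_graph V (Es i)) \<and> (\<Inter>i<k. Es i) = E) \<longleftrightarrow> (\<exists>f t. min_plus_rep V E k f t)"
proof
  have fin: "finite V" using G unfolding graph_def by blast
  assume "\<exists>Es. (\<forall>i<k. threshold_graph V (Es i)) \<and> (\<Inter>i<k. Es i) = E"
  then obtain Es where th: "\<forall>i<k. threshold_graph V (Es i)" and I: "(\<Inter>i<k. Es i) = E" by blast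
  have "\<forall>i\<in>{..<k}. \<exists>p::('a\<Rightarrow>real)\<times>real. \<forall>a\<in>V. \<forall>b\<in>V. a \<noteq> b \<longrightarrow> (fst p a + fst p b \<ge> snd p \<longleftrightarrow> {a,b} \<in> Es i)"
    using th thr_weights by blast
  then obtain P :: "nat \<Rightarrow> ('a\<Rightarrow>real)\<times>real" where P: "\<forall>i\<in>{..<k}. \<forall>a\<in>V. \<forall>b\<in>V. a \<noteq> b \<longrightarrow> (fst (P i) a + fst (P i) b \<ge> snd (P i) \<longleftrightarrow> {a,b} \<in> Es i)"
    by (rule bchoice[elim_format]) blast
  define f where "f x i = ereal (fst (P i) x - snd (P i)/2 + 1/2)" for x i
  have "min_plus_rep V E k f 1"
    unfolding min_plus_rep_def
  proof (intro conjI ballI impI allI)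
    fix x y assume xy: "x \<in> V" "y \<in> V" "x \<noteq> y"
    have "({x, y} \<in> E) \<longleftrightarrow> (\<forall>i<k. {x,y} \<in> Es i)" using I by blast
    also have "\<dots> \<longleftrightarrow> (\<forall>i<k. fst (P i) x + fst (P i) y \<ge> snd (P i))" using P xy by (meson lessThan_iff)
    also have "\<dots> \<longleftrightarrow> (\<forall>i<k. ereal 1 \<le> f x i + f y i)" by (simp add: f_def algebra_simps)
    also have "\<dots> \<longleftrightarrow> ereal 1 \<le> min_plus_dot k (f x) (f y)" using min_dot_ge[OF k] by simp
    finally show "({x, y} \<in> E) = (ereal 1 \<le> min_plus_dot k (f x) (f y))" .
  qed (auto simp: f_def)
  then show "\<exists>f t. min_plus_rep V E k f t" by blast
next
  have fin: "finite V" using G unfolding graph_def by blast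
  assume "\<exists>f t. min_plus_rep V E k f t"
  then obtain f t where R: "min_plus_rep V E k f t" by blast
  have "\<forall>i\<in>{..<k}. \<exists>w::'a\<Rightarrow>real. \<forall>x\<in>V. \<forall>y\<in>V. (f x i + f y i \<ge> ereal t \<longleftrightarrow> w x + w y \<ge> t)"
  proof
    fix i assume "i \<in> {..<k}"
    then have "\<forall>x\<in>V. f x i \<noteq> -\<infinity>" using R unfolding min_plus_rep_def by auto
    then show "\<exists>w::'a\<Rightarrow>real. \<forall>x\<in>V. \<forall>y\<in>V. (f x i + f y i \<ge> ereal t \<longleftrightarrow> w x + w y \<ge> t)"
      using realize_min[OF fin, where h="\<lambda>x. f x i" and t=t] by simp
  qed
  then obtain W where W: "\<forall>i\<in>{..<k}. \<forall>x\<in>V. \<forall>y\<in>V. (f x i + f y i \<ge> ereal t \<longleftrightarrow> W i x + W i y \<ge> t)"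
    by (rule bchoice[elim_format]) blast
  define Es where "Es i = edges_of V (\<lambda>x y. W i x + W i y \<ge> t)" for i
  have key: "{x,y} \<in> E \<longleftrightarrow> (\<forall>i<k. {x,y} \<in> Es i)" if xy: "x \<in> V" "y \<in> V" "x \<noteq> y" for x y
  proof -
    have "{x,y} \<in> E \<longleftrightarrow> ereal t \<le> min_plus_dot k (f x) (f y)" using R xy unfolding min_plus_rep_def by blast
    also have "\<dots> \<longleftrightarrow> (\<forall>i<k. ereal t \<le> f x i + f y i)" using min_dot_ge[OF k] by simp
    also have "\<dots> \<longleftrightarrow> (\<forall>i<k. W i x + W i y \<ge> t)" using W xy by (meson lessThan_iff)
    also have "\<dots> \<longleftrightarrow> (\<forall>i<k. {x,y} \<in> Es i)" unfolding Es_def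
      using edges_of_mem[of "\<lambda>x y. W _ x + W _ y \<ge> t" x V y] xy by (simp add: add.commute)
    finally show ?thesis .
  qed
  have "(\<Inter>i<k. Es i) = E"
  proof
    show "(\<Inter>i<k. Es i) \<subseteq> E"
    proof
      fix e assume e: "e \<in> (\<Inter>i<k. Es i)"
      then have "e \<in> Es 0" using k by auto
      then obtain x y where xy: "x \<in> V" "y \<in> V" "x \<noteq> y" "e = {x,y}" unfolding Es_def using edges_of_elem by blast
      then show "e \<in> E" using key[OF xy(1-3)] e by blast
    qed
    show "E \<subseteq> (\<Inter>i<k. Es i)"
    proof
      fix e assume e: "e \<in> E"
      then obtain x y where xy: "x \<in> V" "y \<in> V" "x \<noteq> y" "e = {x,y}" using G unfolding graph_def by blast
      then show "e \<in> (\<Inter>i<k. Es i)" using key[OF xy(1-3)] e by blast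
    qed
  qed
  moreover have "\<forall>i<k. threshold_graph V (Es i)" unfolding Es_def using thr_intro[OF fin] by blast
  ultimately show "\<exists>Es. (\<forall>i<k. threshold_graph V (Es i)) \<and> (\<Inter>i<k. Es i) = E" by blast
qed


lemma union_iff_max:
  assumes G: "graph V E" and k: "1 \<le> k"
  shows "(\<exists>Es. (\<forall>i<k. threshold_graph V (Es i) \<and> Es i \<subseteq> E) \<and> (\<Union>i<k. Es i) = E) \<longleftrightarrow> (\<exists>f t. max_plus_rep V E k f t)"
proof
  have fin: "finite V" using G unfolding graph_def by blast
  assume "\<exists>Es. (\<forall>i<k. threshold_graph V (Es i) \<and> Es i \<subseteq> E) \<and> (\<Union>i<k. Es i) = E"
  then obtain Es where th: "\<forall>i<k. threshold_graph V (Es i)" and I: "(\<Union>i<k. Es i) = E" by blast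
  have "\<forall>i\<in>{..<k}. \<exists>p::('a\<Rightarrow>real)\<times>real. \<forall>a\<in>V. \<forall>b\<in>V. a \<noteq> b \<longrightarrow> (fst p a + fst p b \<ge> snd p \<longleftrightarrow> {a,b} \<in> Es i)"
    using th thr_weights by blast
  then obtain P :: "nat \<Rightarrow> ('a\<Rightarrow>real)\<times>real" where P: "\<forall>i\<in>{..<k}. \<forall>a\<in>V. \<forall>b\<in>V. a \<noteq> b \<longrightarrow> (fst (P i) a + fst (P i) b \<ge> snd (P i) \<longleftrightarrow> {a,b} \<in> Es i)"
    by (rule bchoice[elim_format]) blast
  define f where "f x i = ereal (fst (P i) x - snd (P i)/2 + 1/2)" for x i
  have "max_plus_rep V E k f 1"
    unfolding max_plus_rep_def
  proof (intro conjI ballI impI allI)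
    fix x y assume xy: "x \<in> V" "y \<in> V" "x \<noteq> y"
    have "({x, y} \<in> E) \<longleftrightarrow> (\<exists>i<k. {x,y} \<in> Es i)" using I by blast
    also have "\<dots> \<longleftrightarrow> (\<exists>i<k. fst (P i) x + fst (P i) y \<ge> snd (P i))" using P xy by (meson lessThan_iff)
    also have "\<dots> \<longleftrightarrow> (\<exists>i<k. ereal 1 \<le> f x i + f y i)" by (simp add: f_def algebra_simps)
    also have "\<dots> \<longleftrightarrow> ereal 1 \<le> max_plus_dot k (f x) (f y)" using max_dot_ge[OF k] by simp
    finally show "({x, y} \<in> E) = (ereal 1 \<le> max_plus_dot k (f x) (f y))" .
  qed (auto simp: f_def)
  then show "\<exists>f t. max_plus_rep V E k f t" by blast
next
  have fin: "finite V" using G unfolding graph_def by blast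
  assume "\<exists>f t. max_plus_rep V E k f t"
  then obtain f t where R: "max_plus_rep V E k f t" by blast
  have "\<forall>i\<in>{..<k}. \<exists>w::'a\<Rightarrow>real. \<forall>x\<in>V. \<forall>y\<in>V. (f x i + f y i \<ge> ereal t \<longleftrightarrow> w x + w y \<ge> t)"
  proof
    fix i assume "i \<in> {..<k}"
    then have "\<forall>x\<in>V. f x i \<noteq> \<infinity>" "t > 0" using R unfolding max_plus_rep_def by auto
    then show "\<exists>w::'a\<Rightarrow>real. \<forall>x\<in>V. \<forall>y\<in>V. (f x i + f y i \<ge> ereal t \<longleftrightarrow> w x + w y \<ge> t)"
      using realize_max[OF fin, where h="\<lambda>x. f x i" and t=t] by simp
  qed
  then obtain W :: "nat \<Rightarrow> 'a \<Rightarrow> real" where W: "\<forall>i\<in>{..<k}. \<forall>x\<in>V. \<forall>y\<in>V. (f x i + f y i \<ge> ereal t \<longleftrightarrow> W i x + W i y \<ge> t)"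
    by (rule bchoice[elim_format]) blast
  define Es where "Es i = edges_of V (\<lambda>x y. W i x + W i y \<ge> t)" for i
  have key: "{x,y} \<in> E \<longleftrightarrow> (\<exists>i<k. {x,y} \<in> Es i)" if xy: "x \<in> V" "y \<in> V" "x \<noteq> y" for x y
  proof -
    have "{x,y} \<in> E \<longleftrightarrow> ereal t \<le> max_plus_dot k (f x) (f y)" using R xy unfolding max_plus_rep_def by blast
    also have "\<dots> \<longleftrightarrow> (\<exists>i<k. ereal t \<le> f x i + f y i)" using max_dot_ge[OF k] by simp
    also have "\<dots> \<longleftrightarrow> (\<exists>i<k. W i x + W i y \<ge> t)" using W xy by (meson lessThan_iff)
    also have "\<dots> \<longleftrightarrow> (\<exists>i<k. {x,y} \<in> Es i)" unfolding Es_def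
      using edges_of_mem[of "\<lambda>x y. W _ x + W _ y \<ge> t" x V y] xy by (simp add: add.commute)
    finally show ?thesis .
  qed
  have sub: "Es i \<subseteq> E" if "i < k" for i
  proof
    fix e assume e: "e \<in> Es i"
    then obtain x y where xy: "x \<in> V" "y \<in> V" "x \<noteq> y" "e = {x,y}" unfolding Es_def using edges_of_elem by blast
    then show "e \<in> E" using key[OF xy(1-3)] e that by blast
  qed
  have "(\<Union>i<k. Es i) = E"
  proof
    show "(\<Union>i<k. Es i) \<subseteq> E" using sub by blast
    show "E \<subseteq> (\<Union>i<k. Es i)"
    proof
      fix e assume e: "e \<in> E"
      then obtain x y where xy: "x \<in> V" "y \<in> V" "x \<noteq> y" "e = {x,y}" using G unfolding graph_def by blast
      then show "e \<in> (\<Union>i<k. Es i)" using key[OF xy(1-3)] e by blast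
    qed
  qed
  moreover have "\<forall>i<k. threshold_graph V (Es i)" unfolding Es_def using thr_intro[OF fin] by blast
  ultimately show "\<exists>Es. (\<forall>i<k. threshold_graph V (Es i) \<and> Es i \<subseteq> E) \<and> (\<Union>i<k. Es i) = E" using sub by blast
qed

lemma inter_iff_union:
  fixes k :: nat
  assumes G: "graph V E" and k: "1 \<le> k"
  shows "(\<exists>Es. (\<forall>i<k. threshold_graph V (Es i)) \<and> (\<Inter>i<k. Es i) = E) \<longleftrightarrow>
    (\<exists>Es. (\<forall>i<k. threshold_graph V (Es i) \<and> Es i \<subseteq> complement V E) \<and> (\<Union>i<k. Es i) = complement V E)"
proof
  assume "\<exists>Es. (\<forall>i<k. threshold_graph V (Es i)) \<and> (\<Inter>i<k. Es i) = E"
  then obtain Es where th: "\<forall>i<k. threshold_graph V (Es i)" and I: "(\<Inter>i<k. Es i) = E" by blast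
  define Fs where "Fs i = complement V (Es i)" for i
  have "\<forall>i<k. threshold_graph V (Fs i)" unfolding Fs_def using th thr_compl by blast
  moreover have sub: "Fs i \<subseteq> complement V E" if "i < k" for i
  proof
    fix e assume e: "e \<in> Fs i"
    then obtain x y where xy: "x \<in> V" "y \<in> V" "x \<noteq> y" "e = {x,y}"
      unfolding Fs_def using compl_elem by blast
    then have "{x,y} \<notin> Es i" using e compl_mem[OF xy(1-3), of "Es i"] unfolding Fs_def by simp
    then have "{x,y} \<notin> E" using I that by blast
    then show "e \<in> complement V E" using xy compl_mem[OF xy(1-3), of E] by simp
  qed
  moreover have "(\<Union>i<k. Fs i) = complement V E"
  proof
    show "(\<Union>i<k. Fs i) \<subseteq> complement V E" using sub by blast
    show "complement V E \<subseteq> (\<Union>i<k. Fs i)"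
    proof
      fix e assume e: "e \<in> complement V E"
      then obtain x y where xy: "x \<in> V" "y \<in> V" "x \<noteq> y" "e = {x,y}"
        using compl_elem by blast
      then have "{x,y} \<notin> E" using e compl_mem[OF xy(1-3), of E] by simp
      then obtain i where i: "i < k" "{x,y} \<notin> Es i" using I by blast
      then have "{x,y} \<in> Fs i" unfolding Fs_def using compl_mem[OF xy(1-3), of "Es i"] by simp
      then show "e \<in> (\<Union>i<k. Fs i)" using i xy by blast
    qed
  qed
  ultimately show "\<exists>Es. (\<forall>i<k. threshold_graph V (Es i) \<and> Es i \<subseteq> complement V E) \<and> (\<Union>i<k. Es i) = complement V E"
    by blast
next
  assume "\<exists>Es. (\<forall>i<k. threshold_graph V (Es i) \<and> Es i \<subseteq> complement V E) \<and> (\<Union>i<k. Es i) = complement V E"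
  then obtain Es where th: "\<forall>i<k. threshold_graph V (Es i)" and sub: "\<forall>i<k. Es i \<subseteq> complement V E"
    and U: "(\<Union>i<k. Es i) = complement V E" by blast
  define Fs where "Fs i = complement V (Es i)" for i
  have "\<forall>i<k. threshold_graph V (Fs i)" unfolding Fs_def using th thr_compl by blast
  moreover have "(\<Inter>i<k. Fs i) = E"
  proof
    show "(\<Inter>i<k. Fs i) \<subseteq> E"
    proof
      fix e assume e: "e \<in> (\<Inter>i<k. Fs i)"
      then have "e \<in> Fs 0" using k by auto
      then obtain x y where xy: "x \<in> V" "y \<in> V" "x \<noteq> y" "e = {x,y}" unfolding Fs_def using compl_elem by blast
      have "{x,y} \<notin> Es i" if "i < k" for i
        using e that compl_mem[OF xy(1-3), of "Es i"] xy(4) unfolding Fs_def by auto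
      then have "{x,y} \<notin> complement V E" using U by blast
      then show "e \<in> E" using xy compl_mem[OF xy(1-3), of E] by simp
    qed
    show "E \<subseteq> (\<Inter>i<k. Fs i)"
    proof
      fix e assume e: "e \<in> E"
      then obtain x y where xy: "x \<in> V" "y \<in> V" "x \<noteq> y" "e = {x,y}" using G unfolding graph_def by blast
      then have "{x,y} \<notin> complement V E" using e compl_mem[OF xy(1-3), of E] by simp
      then have "{x,y} \<notin> Es i" if "i < k" for i using sub that by blast
      then have "{x,y} \<in> Fs i" if "i < k" for i unfolding Fs_def using compl_mem[OF xy(1-3), of "Es i"] that by simp
      then show "e \<in> (\<Inter>i<k. Fs i)" using xy by blast
    qed
  qed
  ultimately show "\<exists>Es. (\<forall>i<k. threshold_graph V (Es i)) \<and> (\<Inter>i<k. Es i) = E" by blast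
qed

theorem mainTheorem9:
  fixes V :: "'a set" and E :: "'a set set"
  assumes "graph V E"
  shows "Theta_hat V E = rho_T V E \<and>
         rho_T V E = rho_T_hat V (complement V E) \<and>
         rho_T_hat V (complement V E) = Theta V (complement V E)"
proof -
  have fin: "finite V" using assms unfolding graph_def by blast
  have GC: "graph V (complement V E)" using graph_compl[OF fin] .
  have e1: "(\<lambda>k. k \<ge> 1 \<and> (\<exists>Es :: nat \<Rightarrow> 'a set set. (\<forall>i<k. threshold_graph V (Es i)) \<and> (\<Inter>i<k. Es i) = E))
      = (\<lambda>k. k \<ge> 1 \<and> (\<exists>f t. min_plus_rep V E k f t))"
  proof (rule ext)
    fix k :: nat show "(k \<ge> 1 \<and> (\<exists>Es :: nat \<Rightarrow> 'a set set. (\<forall>i<k. threshold_graph V (Es i)) \<and> (\<Inter>i<k. Es i) = E))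
      = (k \<ge> 1 \<and> (\<exists>f t. min_plus_rep V E k f t))"
      using inter_iff_min[OF assms, of k] by (cases "k \<ge> 1") simp_all
  qed
  have e2: "(\<lambda>k. k \<ge> 1 \<and> (\<exists>f t. min_plus_rep V E k f t))
      = (\<lambda>k. k \<ge> 1 \<and> (\<exists>f t. max_plus_rep V (complement V E) k f t))"
  proof (rule ext)
    fix k :: nat show "(k \<ge> 1 \<and> (\<exists>f t. min_plus_rep V E k f t))
      = (k \<ge> 1 \<and> (\<exists>f t. max_plus_rep V (complement V E) k f t))"
    proof (cases "k \<ge> 1")
      case True
      show ?thesis using inter_iff_min[OF assms True] inter_iff_union[OF assms True] union_iff_max[OF GC True]
        by simp
    qed simp
  qed
  have e3: "(\<lambda>k. k \<ge> 1 \<and> (\<exists>f t. max_plus_rep V (complement V E) k f t))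
      = (\<lambda>k. k \<ge> 1 \<and> (\<exists>Es :: nat \<Rightarrow> 'a set set. (\<forall>i<k. threshold_graph V (Es i) \<and> Es i \<subseteq> complement V E) \<and> (\<Union>i<k. Es i) = complement V E))"
  proof (rule ext)
    fix k :: nat show "(k \<ge> 1 \<and> (\<exists>f t. max_plus_rep V (complement V E) k f t))
      = (k \<ge> 1 \<and> (\<exists>Es :: nat \<Rightarrow> 'a set set. (\<forall>i<k. threshold_graph V (Es i) \<and> Es i \<subseteq> complement V E) \<and> (\<Union>i<k. Es i) = complement V E))"
      using union_iff_max[OF GC, of k] by (cases "k \<ge> 1") simp_all
  qed
  show ?thesis
    unfolding Theta_hat_def rho_T_def rho_T_hat_def Theta_def
    by (simp only: e1 e2 e3)
qed

end
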